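(* Let $f:\mathbb{R}^n_{>0}\to\mathbb{R}^n_{>0}$ be order-preserving, homogeneous, and multiplicatively convex. Let $\mathcal{C}$ be the set of strongly connected components of $\mathcal{G}(f)$ and $\mathcal{F}$ the set of final classes of $\mathcal{G}(f)$. Then $$r(f)=\max_{C\in\mathcal{C}}r(f^C_0)\quad\text{and}\quad \lambda(f)=\min_{C\in\mathcal{F}}r(f^C_0).$$
   Context: $[n]=\{1,\dots,n\}$; entrywise order. Order-preserving: $x\le y\Rightarrow f(x)\le f(y)$; homogeneous: $f(tx)=tf(x)$ for $t>0$. Multiplicatively convex: each entry of $\log\circ f\circ\exp$ (entrywise $\log,\exp$) is convex on $\mathbb{R}^n$. $f$ extends continuously to an order-preserving homogeneous map on $\mathbb{R}^n_{\ge0}$, also denoted $f$. $P^J_0(x)_j=x_j$ for $j\in J$, $0$ otherwise; $f^J_0=P^J_0fP^J_0$. For $g$ order-preserving homogeneous on $\mathbb{R}^n_{\ge0}$ (or $\mathbb{R}^n_{>0}$): $r(g)=\inf_{x\in\mathbb{R}^n_{>0}}\max_i g(x)_i/x_i$ and $\lambda(g)=\sup_{x\in\mathbb{R}^n_{>0}}\min_i g(x)_i/x_i$. $\mathcal{G}(f)$ is the directed graph on $[n]$ with an arc $i\to j$ when $\lim_{t\to\infty}f(\exp(te_{\{j\}}))_i=\infty$ ($e_{\{j\}}$ the $j$-th standard basis vector). A final class is a strongly connected component with no arcs leaving it. *)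

theory Defs
  imports "HOL-Analysis.Analysis"
begin

definition pos_vec :: "real^'n \<Rightarrow> bool" where
  "pos_vec x \<longleftrightarrow> (\<forall>i. 0 < x $ i)"

definition nonneg_vec :: "real^'n \<Rightarrow> bool" where
  "nonneg_vec x \<longleftrightarrow> (\<forall>i. 0 \<le> x $ i)"

definition order_preserving_pos :: "(real^'n \<Rightarrow> real^'n) \<Rightarrow> bool" where
  "order_preserving_pos f \<longleftrightarrow>
     (\<forall>x y. pos_vec x \<and> pos_vec y \<and> (\<forall>i. x $ i \<le> y $ i) \<longrightarrow> (\<forall>i. f x $ i \<le> f y $ i))"

definition homogeneous_pos :: "(real^'n \<Rightarrow> real^'n) \<Rightarrow> bool" where
  "homogeneous_pos f \<longleftrightarrow> (\<forall>x t. pos_vec x \<and> 0 < t \<longrightarrow> f (t *\<^sub>R x) = t *\<^sub>R f x)"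

definition mult_convex :: "(real^'n \<Rightarrow> real^'n) \<Rightarrow> bool" where
  "mult_convex f \<longleftrightarrow> (\<forall>i. convex_on UNIV (\<lambda>y::real^'n. ln (f (\<chi> k. exp (y $ k)) $ i)))"

text \<open>The continuous extension of an order-preserving homogeneous map from the open
  cone to the closed cone: ext f x = lim_{c -> 0+} f(x + c 1) = inf_{c>0} f(x + c 1).\<close>
definition ext_map :: "(real^'n \<Rightarrow> real^'n) \<Rightarrow> real^'n \<Rightarrow> real^'n" where
  "ext_map f x = (\<chi> i. INF c\<in>{0<..}. f (x + (\<chi> k. c)) $ i)"

definition proj0 :: "'n set \<Rightarrow> real^'n \<Rightarrow> real^'n" where
  "proj0 J x = (\<chi> j. if j \<in> J then x $ j else 0)"

definition f0 :: "'n set \<Rightarrow> (real^'n \<Rightarrow> real^'n) \<Rightarrow> real^'n \<Rightarrow> real^'n" where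
  "f0 J f = proj0 J \<circ> ext_map f \<circ> proj0 J"

definition upper_cw :: "(real^'n \<Rightarrow> real^'n) \<Rightarrow> real" where
  "upper_cw g = (INF x\<in>{x. pos_vec x}. Max (range (\<lambda>i. g x $ i / x $ i)))"

definition lower_cw :: "(real^'n \<Rightarrow> real^'n) \<Rightarrow> real" where
  "lower_cw g = (SUP x\<in>{x. pos_vec x}. Min (range (\<lambda>i. g x $ i / x $ i)))"

definition arc :: "(real^'n \<Rightarrow> real^'n) \<Rightarrow> 'n \<Rightarrow> 'n \<Rightarrow> bool" where
  "arc f i j \<longleftrightarrow>
     filterlim (\<lambda>t. f (\<chi> k. exp (if k = j then t else 0)) $ i) at_top at_top"

definition scc_of :: "(real^'n \<Rightarrow> real^'n) \<Rightarrow> 'n \<Rightarrow> 'n set" where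
  "scc_of f i = {j. (arc f)\<^sup>*\<^sup>* i j \<and> (arc f)\<^sup>*\<^sup>* j i}"

definition sccs :: "(real^'n \<Rightarrow> real^'n) \<Rightarrow> 'n set set" where
  "sccs f = range (scc_of f)"

definition final_classes :: "(real^'n \<Rightarrow> real^'n) \<Rightarrow> 'n set set" where
  "final_classes f = {C \<in> sccs f. \<forall>i j. i \<in> C \<and> arc f i j \<longrightarrow> j \<in> C}"

end

theory Submission
  imports Defs
begin

lemma Max_range_mono:
  fixes A B :: "'n::finite \<Rightarrow> real"
  assumes "\<And>i. A i \<le> B i"
  shows "Max (range A) \<le> Max (range B)"
proof -
  have "\<forall>a. A a \<le> Max (range B)"
  proof
    fix a
    have "B a \<le> Max (range B)" by simp
    then show "A a \<le> Max (range B)" using assms[of a] by linarith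
  qed
  then show ?thesis by (simp add: Max_le_iff)
qed

lemma pos_one: "pos_vec ((\<chi> k. 1) :: real^'n)"
  unfolding pos_vec_def by simp

lemma pos_nonneg: "pos_vec x \<Longrightarrow> nonneg_vec x"
  unfolding pos_vec_def nonneg_vec_def by (simp add: less_imp_le)

lemma proj0_nonneg: "pos_vec x \<Longrightarrow> nonneg_vec (proj0 C x)"
  unfolding pos_vec_def nonneg_vec_def proj0_def by (simp add: less_imp_le)

lemma f0_comp: "f0 C g x $ i = (if i \<in> C then ext_map g (proj0 C x) $ i else 0)"
  unfolding f0_def proj0_def by simp

lemma upper_cw_le_at:
  fixes g :: "real^'n \<Rightarrow> real^'n"
  assumes nn: "\<And>x i. pos_vec x \<Longrightarrow> 0 \<le> g x $ i" and px: "pos_vec x"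
  shows "upper_cw g \<le> Max (range (\<lambda>i. g x $ i / x $ i))"
  unfolding upper_cw_def
proof (rule cINF_lower)
  show "x \<in> {x. pos_vec x}" using px by simp
  show "bdd_below ((\<lambda>x. Max (range (\<lambda>i. g x $ i / x $ i))) ` {x. pos_vec x})"
  proof (rule bdd_belowI2[of _ 0])
    fix y :: "real^'n" assume "y \<in> {x. pos_vec x}"
    then have py: "pos_vec y" by simp
    obtain i0 :: 'n where True by simp
    have "0 \<le> g y $ i0 / y $ i0" using nn[OF py, of i0] py unfolding pos_vec_def
      by (simp add: less_imp_le)
    also have "\<dots> \<le> Max (range (\<lambda>i. g y $ i / y $ i))" by simp
    finally show "0 \<le> Max (range (\<lambda>i. g y $ i / y $ i))" .
  qed
qed

lemma upper_cw_ltD: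
  fixes g :: "real^'n \<Rightarrow> real^'n"
  assumes "upper_cw g < a"
  shows "\<exists>x. pos_vec x \<and> (\<forall>i. g x $ i / x $ i < a)"
proof -
  have ne: "(\<lambda>x. Max (range (\<lambda>i. g x $ i / x $ i))) ` {x. pos_vec x} \<noteq> {}"
    using pos_one by blast
  from cInf_lessD[OF ne] assms obtain x where "pos_vec x" "Max (range (\<lambda>i. g x $ i / x $ i)) < a"
    unfolding upper_cw_def by auto
  then show ?thesis by auto
qed

lemma upper_cw_ge:
  fixes g :: "real^'n \<Rightarrow> real^'n"
  assumes "\<And>x. pos_vec x \<Longrightarrow> a \<le> Max (range (\<lambda>i. g x $ i / x $ i))"
  shows "a \<le> upper_cw g"
  unfolding upper_cw_def
  by (rule cINF_greatest) (use pos_one assms in auto)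

lemma lower_cw_ge_at:
  fixes g :: "real^'n \<Rightarrow> real^'n"
  assumes bd: "\<And>x. pos_vec x \<Longrightarrow> Min (range (\<lambda>i. g x $ i / x $ i)) \<le> B" and px: "pos_vec x"
  shows "Min (range (\<lambda>i. g x $ i / x $ i)) \<le> lower_cw g"
  unfolding lower_cw_def
  by (rule cSUP_upper) (use px bd in \<open>auto intro!: bdd_aboveI2\<close>)

lemma lower_cw_le:
  fixes g :: "real^'n \<Rightarrow> real^'n"
  assumes "\<And>x. pos_vec x \<Longrightarrow> Min (range (\<lambda>i. g x $ i / x $ i)) \<le> a"
  shows "lower_cw g \<le> a"
  unfolding lower_cw_def
  by (rule cSUP_least) (use pos_one assms in auto)

lemma scc_self: "j \<in> scc_of g j"
  unfolding scc_of_def by simp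

lemma scc_conn: "a \<in> scc_of g j \<Longrightarrow> b \<in> scc_of g j \<Longrightarrow> (arc g)\<^sup>*\<^sup>* a b"
  unfolding scc_of_def by (auto intro: rtranclp_trans)

lemma sccs_finite: "finite (sccs (g :: real^'n \<Rightarrow> real^'n))"
  unfolding sccs_def by simp

lemma final_closed: "C \<in> final_classes g \<Longrightarrow> i \<in> C \<Longrightarrow> arc g i l \<Longrightarrow> l \<in> C"
  unfolding final_classes_def by blast

lemma final_scc: "C \<in> final_classes g \<Longrightarrow> \<exists>j. C = scc_of g j"
  unfolding final_classes_def sccs_def by blast

lemma exists_final:
  fixes g :: "real^'n \<Rightarrow> real^'n"
  shows "\<exists>C\<in>final_classes g. \<exists>j\<in>C. (arc g)\<^sup>*\<^sup>* i j"
proof -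
  define R where "R j = {l. (arc g)\<^sup>*\<^sup>* j l}" for j
  obtain j where j: "(arc g)\<^sup>*\<^sup>* i j" and jmin: "\<And>l. (arc g)\<^sup>*\<^sup>* i l \<Longrightarrow> card (R j) \<le> card (R l)"
    using ex_has_least_nat[of "\<lambda>l. (arc g)\<^sup>*\<^sup>* i l" i "\<lambda>l. card (R l)"] by auto
  define C where "C = scc_of g j"
  have "C \<in> final_classes g"
    unfolding final_classes_def
  proof (intro CollectI conjI allI impI)
    show "C \<in> sccs g" unfolding C_def sccs_def by simp
    fix k l assume kl: "k \<in> C \<and> arc g k l"
    have jk: "(arc g)\<^sup>*\<^sup>* j k" using kl unfolding C_def scc_of_def by simp
    have jl: "(arc g)\<^sup>*\<^sup>* j l" using jk kl by (meson rtranclp.rtrancl_into_rtrancl)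
    have sub: "R l \<subseteq> R j" unfolding R_def using jl by (auto intro: rtranclp_trans)
    have "card (R j) \<le> card (R l)" using jmin j jl by (meson rtranclp_trans)
    then have "R l = R j" using sub by (simp add: card_seteq)
    then have "(arc g)\<^sup>*\<^sup>* l j" unfolding R_def by auto
    then show "l \<in> C" unfolding C_def scc_of_def using jl by simp
  qed
  then show ?thesis using j scc_self unfolding C_def by blast
qed

locale L =
  fixes f :: "real^'n \<Rightarrow> real^'n"
  assumes fpos0: "\<And>x. pos_vec x \<Longrightarrow> pos_vec (f x)"
    and op: "order_preserving_pos f"
    and hom: "homogeneous_pos f"
    and mc: "mult_convex f"
begin

lemma fpos: "pos_vec x \<Longrightarrow> 0 < f x $ i"
  using fpos0 unfolding pos_vec_def by blast

lemma fmono: "pos_vec x \<Longrightarrow> pos_vec y \<Longrightarrow> (\<And>k. x $ k \<le> y $ k) \<Longrightarrow> f x $ i \<le> f y $ i"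
  using op unfolding order_preserving_pos_def by blast

lemma fhom: "pos_vec x \<Longrightarrow> 0 < t \<Longrightarrow> f (t *\<^sub>R x) = t *\<^sub>R f x"
  using hom unfolding homogeneous_pos_def by blast

lemma fhom_i: "pos_vec x \<Longrightarrow> 0 < t \<Longrightarrow> f (t *\<^sub>R x) $ i = t * f x $ i"
  using fhom by simp

lemma pos_scale: "pos_vec x \<Longrightarrow> 0 < t \<Longrightarrow> pos_vec (t *\<^sub>R x)"
  unfolding pos_vec_def by simp

lemma indep1_aux:
  assumes na: "\<not> arc f i j" and px: "pos_vec x" and d: "0 < d"
  shows "f (\<chi> k. if k = j then exp d * x$k else x$k) $ i \<le> f x $ i"
proof -
  define v where "v t = ((\<chi> k. exp (if k = j then t else 0)) :: real^'n)" for t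
  have pv: "pos_vec (v t)" for t unfolding v_def pos_vec_def by simp
  have vmono: "t \<le> s \<Longrightarrow> f (v t) $ i \<le> f (v s) $ i" for t s
    by (rule fmono[OF pv pv]) (simp add: v_def)
  obtain B where B: "\<And>t. f (v t) $ i \<le> B"
  proof (rule ccontr)
    assume "\<not> thesis"
    with that have nb: "\<forall>B. \<exists>t. B < f (v t) $ i" by (meson not_le)
    have "filterlim (\<lambda>t. f (v t) $ i) at_top at_top"
      unfolding filterlim_at_top eventually_at_top_linorder
    proof
      fix Z
      obtain t0 where "Z < f (v t0) $ i" using nb by blast
      then show "\<exists>N. \<forall>n\<ge>N. Z \<le> f (v n) $ i"
        using vmono by (meson less_le_trans less_imp_le)
    qed
    then show False using na unfolding arc_def v_def by simp
  qed
  define c where "c = Max (range (\<lambda>k. x $ k))"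
  have xc: "x $ k \<le> c" for k unfolding c_def by simp
  have c0: "0 < c" using xc[of j] px unfolding pos_vec_def by (meson less_le_trans)
  have B0: "0 < B" using B[of 0] fpos[OF pv, of 0 i] by simp
  define L where "L = ln (c * B)"
  define g where "g z = ln (f (\<chi> k. exp (z $ k)) $ i)" for z :: "real^'n"
  have cvx: "convex_on UNIV g" using mc unfolding mult_convex_def g_def by blast
  define Y where "Y = ((\<chi> k. ln (x $ k)) :: real^'n)"
  define w where "w t = ((\<chi> k. if k = j then exp t * x$k else x$k) :: real^'n)" for t
  have pw: "pos_vec (w t)" for t using px unfolding w_def pos_vec_def by simp
  have gw: "g (Y + t *\<^sub>R axis j 1) = ln (f (w t) $ i)" for t
  proof -
    have "(\<chi> k. exp ((Y + t *\<^sub>R axis j 1) $ k)) = w t"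
      using px unfolding Y_def w_def pos_vec_def
      by (simp add: vec_eq_iff axis_def exp_add)
    then show ?thesis unfolding g_def by simp
  qed
  have "w 0 = x" by (simp add: w_def vec_eq_iff)
  then have g0: "g Y = ln (f x $ i)" using gw[of 0] by simp
  have gL: "g (Y + t *\<^sub>R axis j 1) \<le> L" for t
  proof -
    have "f (w t) $ i \<le> f (c *\<^sub>R v t) $ i"
      apply (rule fmono[OF pw pos_scale[OF pv c0]])
      using xc px c0 unfolding w_def v_def pos_vec_def by (auto simp: mult.commute)
    also have "\<dots> = c * f (v t) $ i" by (rule fhom_i[OF pv c0])
    also have "\<dots> \<le> c * B" using B c0 by simp
    finally show ?thesis unfolding gw L_def using fpos[OF pw, of t i] by (simp add: ln_le_cancel_iff)
  qed
  have "g (Y + d *\<^sub>R axis j 1) \<le> g Y"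
  proof (rule ccontr)
    assume nt: "\<not> ?thesis"
    define D where "D = g (Y + d *\<^sub>R axis j 1) - g Y"
    define E where "E = L - g Y"
    have D0: "0 < D" using nt unfolding D_def by simp
    have E0: "0 < E" using gL[of d] D0 unfolding D_def E_def by simp
    define T where "T = d * E / D + d"
    have T0: "d < T" using d D0 E0 unfolding T_def by simp
    define u where "u = d / T"
    have u01: "0 < u" "u < 1" using d T0 unfolding u_def by auto
    have "(1 - u) *\<^sub>R Y + u *\<^sub>R (Y + T *\<^sub>R axis j 1) = Y + d *\<^sub>R axis j 1"
      using T0 d unfolding u_def by (simp add: algebra_simps)
    then have "g (Y + d *\<^sub>R axis j 1) \<le> (1 - u) * g Y + u * g (Y + T *\<^sub>R axis j 1)"
      using convex_onD[OF cvx, of u Y "Y + T *\<^sub>R axis j 1"] u01 by simp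
    also have "\<dots> \<le> (1 - u) * g Y + u * L" using gL[of T] u01 by simp
    finally have "D \<le> u * E" unfolding D_def E_def by (simp add: algebra_simps)
    moreover have "u * E < D"
    proof -
      have "u * E = d * E / T" unfolding u_def by simp
      also have "\<dots> < D"
      proof -
        have "D * T = d * E + d * D" unfolding T_def using D0 by (simp add: field_simps)
        then have "d * E < D * T" using d D0 by simp
        then show ?thesis using T0 d by (simp add: divide_less_eq mult.commute)
      qed
      finally show ?thesis .
    qed
    ultimately show False by simp
  qed
  then have "ln (f (w d) $ i) \<le> ln (f x $ i)" using gw g0 by simp
  then show ?thesis using fpos[OF pw] fpos[OF px] unfolding w_def by simp
qed

lemma indep1_le:
  assumes na: "\<not> arc f i j" and px: "pos_vec x" and py: "pos_vec y"
    and eq: "\<And>k. k \<noteq> j \<Longrightarrow> x$k = y$k" and le: "x$j \<le> y$j"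
  shows "f y $ i \<le> f x $ i"
proof (cases "x$j = y$j")
  case True
  then have "x = y" using eq by (metis vec_eq_iff)
  then show ?thesis by simp
next
  case False
  define d where "d = ln (y$j / x$j)"
  have xj: "0 < x$j" "0 < y$j" using px py unfolding pos_vec_def by auto
  have d0: "0 < d" unfolding d_def using False le xj by simp
  have "y = (\<chi> k. if k = j then exp d * x$k else x$k)"
    using xj eq unfolding d_def by (auto simp: vec_eq_iff)
  then show ?thesis using indep1_aux[OF na px d0] by simp
qed

lemma indep1:
  assumes na: "\<not> arc f i j" and px: "pos_vec x" and py: "pos_vec y"
    and eq: "\<And>k. k \<noteq> j \<Longrightarrow> x$k = y$k"
  shows "f x $ i = f y $ i"
proof (cases "x$j \<le> y$j")
  case True
  have "f y $ i \<le> f x $ i" by (rule indep1_le[OF na px py eq True])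
  moreover have "f x $ i \<le> f y $ i"
    by (rule fmono[OF px py]) (metis True eq order_refl)
  ultimately show ?thesis by simp
next
  case False
  have "f x $ i \<le> f y $ i" by (rule indep1_le[OF na py px]) (use eq False in auto)
  moreover have "f y $ i \<le> f x $ i"
    by (rule fmono[OF py px]) (metis False eq order_refl nle_le)
  ultimately show ?thesis by simp
qed

lemma indep_aux:
  assumes "finite A" and px: "pos_vec x" and py: "pos_vec y"
  shows "(\<forall>k\<in>A. \<not> arc f i k) \<Longrightarrow> f (\<chi> k. if k \<in> A then y$k else x$k) $ i = f x $ i"
  using assms(1)
proof (induction A rule: finite_induct)
  case empty
  then show ?case by simp
next
  case (insert a A)
  have p1: "pos_vec (\<chi> k. if k \<in> insert a A then y$k else x$k)"
    using px py unfolding pos_vec_def by simp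
  have p2: "pos_vec (\<chi> k. if k \<in> A then y$k else x$k)"
    using px py unfolding pos_vec_def by simp
  have "f (\<chi> k. if k \<in> insert a A then y$k else x$k) $ i = f (\<chi> k. if k \<in> A then y$k else x$k) $ i"
    by (rule indep1[where j=a, OF _ p1 p2]) (use insert in auto)
  then show ?case using insert by simp
qed

lemma indep:
  assumes px: "pos_vec x" and py: "pos_vec y" and eq: "\<And>k. arc f i k \<Longrightarrow> x$k = y$k"
  shows "f x $ i = f y $ i"
proof -
  have "f (\<chi> k. if k \<in> {k. x$k \<noteq> y$k} then y$k else x$k) $ i = f x $ i"
    by (rule indep_aux[OF _ px py]) (use eq in auto)
  moreover have "(\<chi> k. if k \<in> {k. x$k \<noteq> y$k} then y$k else x$k) = y"
    by (simp add: vec_eq_iff)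
  ultimately show ?thesis by simp
qed

lemma mono_nb:
  assumes px: "pos_vec x" and py: "pos_vec y" and le: "\<And>k. arc f i k \<Longrightarrow> x$k \<le> y$k"
  shows "f x $ i \<le> f y $ i"
proof -
  define z where "z = (\<chi> k. if arc f i k then x$k else y$k)"
  have pz: "pos_vec z" using px py unfolding z_def pos_vec_def by simp
  have "f x $ i = f z $ i" by (rule indep[OF px pz]) (simp add: z_def)
  also have "\<dots> \<le> f y $ i" by (rule fmono[OF pz py]) (simp add: z_def le)
  finally show ?thesis .
qed

lemma pos_add_const: "nonneg_vec p \<Longrightarrow> 0 < c \<Longrightarrow> pos_vec (p + (\<chi> k. c))"
  unfolding nonneg_vec_def pos_vec_def by (simp add: add_nonneg_pos)

lemma ext_bdd: "nonneg_vec p \<Longrightarrow> bdd_below ((\<lambda>c. f (p + (\<chi> k. c)) $ i) ` {0<..})"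
  by (rule bdd_belowI2[of _ 0]) (auto intro: less_imp_le fpos pos_add_const)

lemma ext_nonneg: "nonneg_vec p \<Longrightarrow> 0 \<le> ext_map f p $ i"
  unfolding ext_map_def vec_lambda_beta
  by (rule cINF_greatest) (auto intro!: less_imp_le fpos pos_add_const)

lemma ext_le_point: "nonneg_vec p \<Longrightarrow> 0 < c \<Longrightarrow> ext_map f p $ i \<le> f (p + (\<chi> k. c)) $ i"
  unfolding ext_map_def using ext_bdd by (auto intro!: cINF_lower)

lemma ext_lt: assumes "nonneg_vec p" "ext_map f p $ i < a"
  shows "\<exists>c>0. f (p + (\<chi> k. c)) $ i < a"
  using assms(2) unfolding ext_map_def
  by (auto dest!: cInf_lessD[rotated])

lemma ext_le_f:
  assumes p: "nonneg_vec p" and px: "pos_vec x" and le: "\<And>k. p$k \<le> x$k"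
  shows "ext_map f p $ i \<le> f x $ i"
proof (rule field_le_epsilon)
  fix e :: real assume e: "0 < e"
  define m where "m = Min (range (\<lambda>k. x $ k))"
  have m0: "0 < m" using px unfolding m_def pos_vec_def by simp
  have mx: "m \<le> x$k" for k unfolding m_def by simp
  have fx0: "0 < f x $ i" using fpos[OF px] .
  define c where "c = e * m / f x $ i"
  have c0: "0 < c" unfolding c_def using e m0 fx0 by simp
  have cm: "0 < 1 + c/m" using c0 m0 by (simp add: add_pos_pos)
  have "ext_map f p $ i \<le> f (p + (\<chi> k. c)) $ i" by (rule ext_le_point[OF p c0])
  also have "\<dots> \<le> f ((1 + c/m) *\<^sub>R x) $ i"
  proof (rule fmono[OF pos_add_const[OF p c0] pos_scale[OF px]])
    show "0 < 1 + c/m" by (rule cm)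
    fix k
    have "c \<le> c / m * x$k" using mx[of k] c0 m0 by (simp add: field_simps)
    then show "(p + (\<chi> k. c)) $ k \<le> ((1 + c / m) *\<^sub>R x) $ k"
      using le[of k] by (simp add: algebra_simps)
  qed
  also have "\<dots> = (1 + c/m) * f x $ i" by (rule fhom_i[OF px cm])
  also have "\<dots> = f x $ i + e" unfolding c_def using m0 fx0 by (simp add: field_simps)
  finally show "ext_map f p $ i \<le> f x $ i + e" .
qed

lemma ext_ge_f:
  assumes p: "nonneg_vec p" and px: "pos_vec x" and le: "\<And>l. arc f i l \<Longrightarrow> x$l \<le> p$l"
  shows "f x $ i \<le> ext_map f p $ i"
  unfolding ext_map_def vec_lambda_beta
proof (rule cINF_greatest)
  show "{0::real<..} \<noteq> {}" by auto
  fix c :: real assume "c \<in> {0<..}"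
  then have c0: "0 < c" by simp
  show "f x $ i \<le> f (p + (\<chi> k. c)) $ i"
    by (rule mono_nb[OF px pos_add_const[OF p c0]]) (use le c0 in \<open>force\<close>)
qed

lemma f0_nonneg: "pos_vec x \<Longrightarrow> 0 \<le> f0 C f x $ i"
  unfolding f0_comp using ext_nonneg[OF proj0_nonneg] by simp

lemma r_ge: "upper_cw (f0 C f) \<le> upper_cw f"
proof (rule upper_cw_ge)
  fix x :: "real^'n" assume px: "pos_vec x"
  have "upper_cw (f0 C f) \<le> Max (range (\<lambda>i. f0 C f x $ i / x $ i))"
    by (rule upper_cw_le_at[OF f0_nonneg px])
  also have "\<dots> \<le> Max (range (\<lambda>i. f x $ i / x $ i))"
  proof -
    have "f0 C f x $ i / x $ i \<le> f x $ i / x $ i" for i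
    proof -
      have xi: "0 < x $ i" using px unfolding pos_vec_def by simp
      have "f0 C f x $ i \<le> f x $ i"
      proof (cases "i \<in> C")
        case True
        have "ext_map f (proj0 C x) $ i \<le> f x $ i"
          by (rule ext_le_f[OF proj0_nonneg[OF px] px])
             (use px in \<open>auto simp: proj0_def pos_vec_def less_imp_le\<close>)
        then show ?thesis using True unfolding f0_comp by simp
      next
        case False
        then show ?thesis unfolding f0_comp using fpos[OF px, of i] by simp
      qed
      then show ?thesis using xi by (simp add: divide_right_mono)
    qed
    then show ?thesis by (rule Max_range_mono)
  qed
  finally show "upper_cw (f0 C f) \<le> Max (range (\<lambda>i. f x $ i / x $ i))" .
qed

lemma down_claim:
  assumes lt: "\<forall>C\<in>sccs f. upper_cw (f0 C f) < \<rho>"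
  shows "finite S \<Longrightarrow> (\<forall>i\<in>S. \<forall>j. arc f i j \<longrightarrow> j \<in> S) \<Longrightarrow> \<exists>x. pos_vec x \<and> (\<forall>i\<in>S. f x $ i < \<rho> * x $ i)"
proof (induction S rule: finite_psubset_induct)
  case (psubset S)
  show ?case
  proof (cases "S = {}")
    case True
    then show ?thesis using pos_one by blast
  next
    case False
    define R where "R j = {l. (arc f)\<^sup>*\<^sup>* j l}" for j
    obtain i0 where "i0 \<in> S" using False by blast
    have "\<forall>y. y \<in> S \<longrightarrow> card (R y) < CARD('n) + 1"
      by (simp add: card_mono less_Suc_eq_le)
    then obtain i where iS: "i \<in> S" and imax: "\<And>k. k \<in> S \<Longrightarrow> card (R k) \<le> card (R i)"
      using ex_has_greatest_nat[of "\<lambda>k. k \<in> S" i0 "\<lambda>k. card (R k)" "CARD('n) + 1"] \<open>i0 \<in> S\<close>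
      by blast
    define C where "C = scc_of f i"
    have iC: "i \<in> C" unfolding C_def by (rule scc_self)
    have Cs: "C \<in> sccs f" unfolding C_def sccs_def by simp
    have fC: "finite C" by simp
    define S' where "S' = S - C"
    have S'sub: "S' \<subset> S" unfolding S'_def using iS iC by blast
    have noC: "l \<notin> C" if kS: "k \<in> S'" and kl: "arc f k l" for k l
    proof
      assume "l \<in> C"
      then have "(arc f)\<^sup>*\<^sup>* l i" unfolding C_def scc_of_def by simp
      then have ki: "(arc f)\<^sup>*\<^sup>* k i" using kl by (meson converse_rtranclp_into_rtranclp)
      have sub: "R i \<subseteq> R k" unfolding R_def using ki by (auto intro: rtranclp_trans)
      have "card (R k) \<le> card (R i)" using imax kS unfolding S'_def by simp
      then have "R i = R k" using sub by (simp add: card_seteq)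
      then have "(arc f)\<^sup>*\<^sup>* i k" unfolding R_def by auto
      then have "k \<in> C" unfolding C_def scc_of_def using ki by simp
      then show False using kS unfolding S'_def by simp
    qed
    have S'closed: "\<forall>k\<in>S'. \<forall>l. arc f k l \<longrightarrow> l \<in> S'"
      using noC psubset.prems unfolding S'_def by blast
    obtain x' where px': "pos_vec x'" and x'lt: "\<forall>k\<in>S'. f x' $ k < \<rho> * x' $ k"
      using psubset.IH[OF S'sub S'closed] by blast
    obtain y where py: "pos_vec y" and ylt: "\<forall>k. f0 C f y $ k / y $ k < \<rho>"
      using upper_cw_ltD lt Cs by blast
    define p where "p = proj0 C y"
    have pn: "nonneg_vec p" unfolding p_def by (rule proj0_nonneg[OF py])
    have "\<forall>k\<in>C. \<exists>c>0. f (p + (\<chi> k. c)) $ k < \<rho> * y $ k"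
    proof
      fix k assume kC: "k \<in> C"
      have yk: "0 < y $ k" using py unfolding pos_vec_def by simp
      have "ext_map f p $ k / y $ k < \<rho>" using ylt[rule_format, of k] kC unfolding f0_comp p_def by simp
      then have "ext_map f p $ k < \<rho> * y $ k" using yk by (simp add: divide_less_eq mult.commute)
      then show "\<exists>c>0. f (p + (\<chi> k. c)) $ k < \<rho> * y $ k" by (rule ext_lt[OF pn])
    qed
    obtain cf where cf: "\<And>k. k \<in> C \<Longrightarrow> 0 < cf k \<and> f (p + (\<chi> l. cf k)) $ k < \<rho> * y $ k"
    proof -
      from bchoice[OF \<open>\<forall>k\<in>C. \<exists>c>0. f (p + (\<chi> k. c)) $ k < \<rho> * y $ k\<close>]
      obtain cf where "\<forall>k\<in>C. 0 < cf k \<and> f (p + (\<chi> l. cf k)) $ k < \<rho> * y $ k" by auto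
      then show ?thesis using that by auto
    qed
    define c where "c = Min (cf ` C)"
    have c0: "0 < c" unfolding c_def
    proof (subst Min_gr_iff)
      show "finite (cf ` C)" using fC by simp
      show "cf ` C \<noteq> {}" using iC by blast
      show "\<forall>a\<in>cf ` C. 0 < a" using cf by blast
    qed
    have cle: "k \<in> C \<Longrightarrow> c \<le> cf k" for k unfolding c_def using fC by simp
    have plt: "f (p + (\<chi> k. c)) $ k < \<rho> * y $ k" if kC: "k \<in> C" for k
    proof -
      have "f (p + (\<chi> k. c)) $ k \<le> f (p + (\<chi> l. cf k)) $ k"
        by (rule fmono[OF pos_add_const[OF pn c0] pos_add_const[OF pn]]) (use cf kC cle in auto)
      then show ?thesis using cf[OF kC] by linarith
    qed
    define M where "M = Max (range (\<lambda>k. x' $ k))"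
    have xM: "x' $ k \<le> M" for k unfolding M_def by simp
    have M0: "0 < M" using xM[of i] px' unfolding pos_vec_def by (meson less_le_trans)
    define s where "s = c / M"
    have s0: "0 < s" unfolding s_def using c0 M0 by simp
    have sx: "s * x' $ k \<le> c" for k
    proof -
      have "s * x' $ k \<le> s * M" using xM s0 by simp
      then show ?thesis unfolding s_def using M0 by simp
    qed
    define x where "x = (\<chi> k. if k \<in> C then y $ k else s * x' $ k)"
    have px: "pos_vec x" using py px' s0 unfolding x_def pos_vec_def by simp
    have "\<forall>k\<in>S. f x $ k < \<rho> * x $ k"
    proof
      fix k assume kS: "k \<in> S"
      show "f x $ k < \<rho> * x $ k"
      proof (cases "k \<in> C")
        case True
        have "f x $ k \<le> f (p + (\<chi> k. c)) $ k"
        proof (rule mono_nb[OF px pos_add_const[OF pn c0]])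
          fix l
          show "x $ l \<le> (p + (\<chi> k. c)) $ l"
            using sx[of l] c0 unfolding x_def p_def proj0_def by simp
        qed
        also have "\<dots> < \<rho> * y $ k" by (rule plt[OF True])
        finally show ?thesis unfolding x_def using True by simp
      next
        case False
        then have kS': "k \<in> S'" unfolding S'_def using kS by simp
        have "f x $ k = f (s *\<^sub>R x') $ k"
          by (rule indep[OF px pos_scale[OF px' s0]]) (use noC[OF kS'] in \<open>simp add: x_def\<close>)
        also have "\<dots> = s * f x' $ k" by (rule fhom_i[OF px' s0])
        also have "\<dots> < s * (\<rho> * x' $ k)" using x'lt kS' s0 by simp
        finally show ?thesis unfolding x_def using False by (simp add: algebra_simps)
      qed
    qed
    then show ?thesis using px by blast
  qed
qed

lemma r_le: "upper_cw f \<le> Max ((\<lambda>C. upper_cw (f0 C f)) ` sccs f)"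
proof (rule field_le_epsilon)
  fix e :: real assume e: "0 < e"
  define m where "m = Max ((\<lambda>C. upper_cw (f0 C f)) ` sccs f)"
  have "\<forall>C\<in>sccs f. upper_cw (f0 C f) < m + e"
  proof
    fix C assume "C \<in> sccs f"
    then have "upper_cw (f0 C f) \<le> m" unfolding m_def using sccs_finite by simp
    then show "upper_cw (f0 C f) < m + e" using e by simp
  qed
  then obtain x where px: "pos_vec x" and xlt: "\<forall>i\<in>UNIV. f x $ i < (m + e) * x $ i"
    using down_claim[of "m + e" UNIV] by auto
  have "upper_cw f \<le> Max (range (\<lambda>i. f x $ i / x $ i))"
    by (rule upper_cw_le_at[OF _ px]) (simp add: fpos less_imp_le)
  also have "\<dots> \<le> m + e"
  proof -
    have "f x $ i / x $ i \<le> m + e" for i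
      using xlt px unfolding pos_vec_def by (simp add: divide_le_eq mult.commute less_imp_le)
    then show ?thesis by simp
  qed
  finally show "upper_cw f \<le> Max ((\<lambda>C. upper_cw (f0 C f)) ` sccs f) + e" unfolding m_def .
qed

lemma final_f0:
  assumes C: "C \<in> final_classes f" and kC: "k \<in> C" and py: "pos_vec y"
  shows "f0 C f y $ k = f y $ k"
proof -
  have "ext_map f (proj0 C y) $ k \<le> f y $ k"
    by (rule ext_le_f[OF proj0_nonneg[OF py] py])
       (use py in \<open>auto simp: proj0_def pos_vec_def less_imp_le\<close>)
  moreover have "f y $ k \<le> ext_map f (proj0 C y) $ k"
    by (rule ext_ge_f[OF proj0_nonneg[OF py] py]) (use final_closed[OF C kC] in \<open>simp add: proj0_def\<close>)
  ultimately show ?thesis unfolding f0_comp using kC by simp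
qed

lemma lam_pair:
  assumes C: "C \<in> final_classes f" and px: "pos_vec x" and py: "pos_vec y"
  shows "Min (range (\<lambda>i. f x $ i / x $ i)) \<le> Max (range (\<lambda>i. f0 C f y $ i / y $ i))"
proof -
  obtain j0 where Cj: "C = scc_of f j0" using final_scc[OF C] by blast
  have fC: "finite C" by simp
  have neC: "C \<noteq> {}" using scc_self Cj by blast
  define t where "t = Max ((\<lambda>k. x $ k / y $ k) ` C)"
  have "t \<in> (\<lambda>k. x $ k / y $ k) ` C"
    unfolding t_def by (rule Max_in) (use fC neC in auto)
  then obtain k where kC: "k \<in> C" and tk: "t = x $ k / y $ k" by blast
  have xk: "0 < x $ k" and yk: "0 < y $ k" using px py kC unfolding pos_vec_def by auto
  have t0: "0 < t" using xk yk tk by simp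
  have tl: "x $ l \<le> t * y $ l" if "l \<in> C" for l
  proof -
    have "x $ l / y $ l \<le> t" unfolding t_def using that fC by simp
    then show ?thesis using py unfolding pos_vec_def by (simp add: divide_le_eq mult.commute)
  qed
  have "f x $ k \<le> f (t *\<^sub>R y) $ k"
    by (rule mono_nb[OF px pos_scale[OF py t0]]) (use tl final_closed[OF C kC] in simp)
  also have "\<dots> = t * f y $ k" by (rule fhom_i[OF py t0])
  finally have "f x $ k / x $ k \<le> t * f y $ k / x $ k" using xk by (simp add: divide_right_mono)
  also have "\<dots> = f y $ k / y $ k" using tk xk yk by simp
  also have "\<dots> = f0 C f y $ k / y $ k" using final_f0[OF C kC py] by simp
  finally have *: "f x $ k / x $ k \<le> f0 C f y $ k / y $ k" .
  have "Min (range (\<lambda>i. f x $ i / x $ i)) \<le> f x $ k / x $ k" by simp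
  also note *
  also have "f0 C f y $ k / y $ k \<le> Max (range (\<lambda>i. f0 C f y $ i / y $ i))" by simp
  finally show ?thesis .
qed

lemma lam_le: "C \<in> final_classes f \<Longrightarrow> lower_cw f \<le> upper_cw (f0 C f)"
  by (rule lower_cw_le, rule upper_cw_ge, rule lam_pair)

lemma lam_bdd: "\<exists>B. \<forall>x. pos_vec x \<longrightarrow> Min (range (\<lambda>i. f x $ i / x $ i)) \<le> B"
proof -
  obtain C where C: "C \<in> final_classes f" using exists_final by blast
  show ?thesis using lam_pair[OF C _ pos_one] by blast
qed

lemma lower_ge_at: "pos_vec x \<Longrightarrow> Min (range (\<lambda>i. f x $ i / x $ i)) \<le> lower_cw f"
  using lam_bdd lower_cw_ge_at by metis

lemma lam_ge:
  assumes rl: "\<rho> < Min ((\<lambda>C. upper_cw (f0 C f)) ` final_classes f)"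
  shows "\<rho> \<le> lower_cw f"
proof (cases "\<rho> \<le> 0")
  case True
  have "0 \<le> Min (range (\<lambda>i. f (\<chi> k. 1) $ i / (\<chi> k. 1::real^'n) $ i))"
    using fpos[OF pos_one] by (simp add: less_imp_le)
  also have "\<dots> \<le> lower_cw f" by (rule lower_ge_at[OF pos_one])
  finally show ?thesis using True by simp
next
  case False
  then have r0: "0 < \<rho>" by simp
  define \<mu> where "\<mu> = Min ((\<lambda>C. upper_cw (f0 C f)) ` final_classes f)"
  have finF: "finite (final_classes f)"
    using sccs_finite[of f] unfolding final_classes_def by simp
  define T where "T x = (\<chi> i. max (x$i) (f x $ i / \<rho>))" for x :: "real^'n"
  define X where "X n = (T ^^ n) (\<chi> k. 1)" for n
  have XS: "X (Suc n) $ i = max (X n $ i) (f (X n) $ i / \<rho>)" for n i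
    unfolding X_def T_def by simp
  have X1: "1 \<le> X n $ i" for n i
  proof (induction n arbitrary: i)
    case 0
    then show ?case unfolding X_def by simp
  next
    case (Suc n)
    then show ?case unfolding XS by (meson max.coboundedI1)
  qed
  have pX: "pos_vec (X n)" for n using X1 unfolding pos_vec_def by (meson less_le_trans zero_less_one)
  have Xstep: "X n $ i \<le> X (Suc n) $ i" for n i unfolding XS by simp
  have Xf: "f (X n) $ i \<le> \<rho> * X (Suc n) $ i" for n i
  proof -
    have "f (X n) $ i / \<rho> \<le> X (Suc n) $ i" unfolding XS by simp
    then show ?thesis using r0 by (simp add: divide_le_eq mult.commute)
  qed
  have Xmono: "m \<le> n \<Longrightarrow> X m $ i \<le> X n $ i" for m n i
    using lift_Suc_mono_le[of "\<lambda>n. X n $ i"] Xstep by blast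
  define good where "good n i \<longleftrightarrow> \<rho> * X n $ i \<le> f (X n) $ i" for n i
  have good_suc: "good (Suc n) i" if g: "good n i" for n i
  proof -
    have "X n $ i \<le> f (X n) $ i / \<rho>" using g r0 unfolding good_def by (simp add: le_divide_eq mult.commute)
    then have xs: "X (Suc n) $ i = f (X n) $ i / \<rho>" unfolding XS by simp
    have "f (X n) $ i \<le> f (X (Suc n)) $ i" by (rule fmono[OF pX pX Xstep])
    then show ?thesis unfolding good_def xs using r0 by simp
  qed
  have good_mono: "good n i" if "good m i" "m \<le> n" for m n i
    using that(2,1) by (induction n rule: dec_induct) (auto intro: good_suc)
  define unb where "unb i \<longleftrightarrow> (\<forall>K. \<exists>n. K < X n $ i)" for i
  have unb_good: "\<exists>n. good n i" if u: "unb i" for i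
  proof (rule ccontr)
    assume ng: "\<nexists>n. good n i"
    have "X n $ i \<le> 1" for n
    proof (induction n)
      case 0
      then show ?case unfolding X_def by simp
    next
      case (Suc n)
      have "f (X n) $ i < \<rho> * X n $ i" using ng unfolding good_def by (meson not_le)
      then have "f (X n) $ i / \<rho> < X n $ i" using r0 by (simp add: divide_less_eq mult.commute)
      then show ?case unfolding XS using Suc by simp
    qed
    then show False using u unfolding unb_def by (meson not_le)
  qed
  have arc_unb: "unb i" if a: "arc f i j" and u: "unb j" for i j
  proof (rule ccontr)
    assume "\<not> unb i"
    then obtain K where K: "\<And>n. X n $ i \<le> K" unfolding unb_def by (meson not_le)
    define v where "v t = ((\<chi> k. exp (if k = j then t else 0)) :: real^'n)" for t
    have pv: "pos_vec (v t)" for t unfolding v_def pos_vec_def by simp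
    have "eventually (\<lambda>t. \<rho> * K < f (v t) $ i) at_top"
      using a unfolding arc_def v_def filterlim_at_top_dense by blast
    then obtain T0 where T0: "\<And>t. t \<ge> T0 \<Longrightarrow> \<rho> * K < f (v t) $ i"
      unfolding eventually_at_top_linorder by blast
    obtain n where n: "exp T0 < X n $ j" using u unfolding unb_def by blast
    define t where "t = ln (X n $ j)"
    have Xj: "0 < X n $ j" using pX unfolding pos_vec_def by simp
    have tT: "T0 \<le> t" unfolding t_def using n Xj by (metis less_imp_le ln_exp ln_le_cancel_iff exp_gt_zero)
    have "f (v t) $ i \<le> f (X n) $ i"
    proof (rule fmono[OF pv pX])
      fix k show "v t $ k \<le> X n $ k"
        unfolding v_def t_def using Xj X1[of n k] by simp
    qed
    also have "\<dots> \<le> \<rho> * X (Suc n) $ i" by (rule Xf)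
    also have "\<dots> \<le> \<rho> * K" using K r0 by simp
    finally show False using T0[OF tT] by simp
  qed
  have rt_unb: "unb i" if r: "(arc f)\<^sup>*\<^sup>* i j" and u: "unb j" for i j
    using r u by (induction rule: converse_rtranclp_induct) (auto intro: arc_unb)
  have Fk: "pos_vec ((f ^^ k) (\<chi> k. 1)) \<and> (\<forall>i. (f ^^ k) (\<chi> k. 1) $ i \<le> \<rho> ^ k * X k $ i)" for k
  proof (induction k)
    case 0
    then show ?case unfolding X_def using pos_one by simp
  next
    case (Suc k)
    have pF: "pos_vec ((f ^^ Suc k) (\<chi> k. 1))" using fpos0 Suc by simp
    have rk: "0 < \<rho> ^ k" using r0 by simp
    have "(f ^^ Suc k) (\<chi> k. 1) $ i \<le> \<rho> ^ Suc k * X (Suc k) $ i" for i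
    proof -
      have "(f ^^ Suc k) (\<chi> k. 1) $ i = f ((f ^^ k) (\<chi> k. 1)) $ i" by simp
      also have "\<dots> \<le> f (\<rho> ^ k *\<^sub>R X k) $ i"
        by (rule fmono[OF conjunct1[OF Suc] pos_scale[OF pX rk]]) (use Suc in simp)
      also have "\<dots> = \<rho> ^ k * f (X k) $ i" by (rule fhom_i[OF pX rk])
      also have "\<dots> \<le> \<rho> ^ k * (\<rho> * X (Suc k) $ i)" using Xf rk by simp
      finally show ?thesis by (simp add: algebra_simps)
    qed
    then show ?case using pF by simp
  qed
  have final_unb: "\<exists>j\<in>C. unb j" if C: "C \<in> final_classes f" for C
  proof (rule ccontr)
    assume nu: "\<not> (\<exists>j\<in>C. unb j)"
    obtain j0 where Cj: "C = scc_of f j0" using final_scc[OF C] by blast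
    have j0C: "j0 \<in> C" using Cj scc_self by blast
    have fC: "finite C" by simp
    have "\<forall>j\<in>C. \<exists>K. \<forall>n. X n $ j \<le> K" using nu unfolding unb_def by (meson not_le)
    then obtain Kf where Kf: "\<And>j n. j \<in> C \<Longrightarrow> X n $ j \<le> Kf j" by metis
    define K where "K = Max (Kf ` C)"
    have hb: "X n $ j \<le> K" if "j \<in> C" for n j
    proof -
      have "Kf j \<le> K" unfolding K_def using fC that by simp
      then show ?thesis using Kf[OF that, of n] by simp
    qed
    have K0: "0 < K" using hb[OF j0C, of 0] X1[of 0 j0] by simp
    have muC: "\<mu> \<le> upper_cw (f0 C f)" unfolding \<mu>_def using finF C by simp
    define \<rho>' where "\<rho>' = (\<rho> + \<mu>) / 2"
    have rr: "\<rho> < \<rho>'" "\<rho>' < \<mu>" using rl unfolding \<rho>'_def \<mu>_def by simp_all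
    have r'0: "0 < \<rho>'" using rr r0 by simp
    define q where "q = \<rho> / \<rho>'"
    have q01: "0 < q" "q < 1" unfolding q_def using r0 rr r'0 by simp_all
    obtain N where N: "q ^ N < 1 / K" using real_arch_pow_inv[OF _ q01(2), of "1/K"] K0 by auto
    define a where "a k j = (f ^^ k) (\<chi> k. 1) $ j / \<rho>' ^ k" for k j
    have a0: "0 < a k j" for k j unfolding a_def using Fk[of k] r'0 unfolding pos_vec_def by simp
    define y where "y = (\<chi> j. Min ((\<lambda>k. a k j) ` {..N}))"
    have py: "pos_vec y" unfolding y_def pos_vec_def using a0 by (simp add: Min_gr_iff)
    have ya: "y $ j \<le> a k j" if "k \<le> N" for k j unfolding y_def using that by simp
    have yin: "\<exists>k\<le>N. y $ j = a k j" for j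
    proof -
      have "Min ((\<lambda>k. a k j) ` {..N}) \<in> (\<lambda>k. a k j) ` {..N}" by (rule Min_in) auto
      then obtain k where "k \<in> {..N}" "Min ((\<lambda>k. a k j) ` {..N}) = a k j" by blast
      then show ?thesis unfolding y_def by auto
    qed
    have fy: "f y $ j \<le> \<rho>' * a (Suc k) j" if kN: "k \<le> N" for k j
    proof -
      have rk: "0 < 1 / \<rho>' ^ k" using r'0 by simp
      have "f y $ j \<le> f ((1 / \<rho>' ^ k) *\<^sub>R (f ^^ k) (\<chi> k. 1)) $ j"
      proof (rule fmono[OF py pos_scale[OF conjunct1[OF Fk] rk]])
        fix l show "y $ l \<le> ((1 / \<rho>' ^ k) *\<^sub>R (f ^^ k) (\<chi> k. 1)) $ l"
          using ya[OF kN, of l] unfolding a_def by simp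
      qed
      also have "\<dots> = (1 / \<rho>' ^ k) * f ((f ^^ k) (\<chi> k. 1)) $ j"
        by (rule fhom_i[OF conjunct1[OF Fk] rk])
      also have "\<dots> = \<rho>' * a (Suc k) j" unfolding a_def using r'0 by (simp add: field_simps)
      finally show ?thesis .
    qed
    have fyC: "f y $ j \<le> \<rho>' * y $ j" if jC: "j \<in> C" for j
    proof -
      obtain k0 where k0: "k0 \<le> N" "y $ j = a k0 j" using yin by blast
      show ?thesis
      proof (cases k0)
        case 0
        then have y1: "y $ j = 1" using k0 unfolding a_def by simp
        have "a (Suc N) j \<le> \<rho> ^ Suc N * K / \<rho>' ^ Suc N"
        proof -
          have "(f ^^ Suc N) (\<chi> k. 1) $ j \<le> \<rho> ^ Suc N * X (Suc N) $ j" using Fk by blast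
          also have "\<dots> \<le> \<rho> ^ Suc N * K" using hb[OF jC] r0 by simp
          finally show ?thesis unfolding a_def using r'0 by (simp add: divide_right_mono)
        qed
        also have "\<dots> = K * q ^ Suc N" unfolding q_def by (simp add: power_divide)
        also have "\<dots> \<le> K * q ^ N"
          using q01 K0 by (simp add: power_Suc mult_left_le_one_le less_imp_le)
        also have "\<dots> < 1" using N K0 by (simp add: less_divide_eq mult.commute)
        finally have "a (Suc N) j < 1" .
        then have "f y $ j \<le> \<rho>' * 1" using fy[of N j] r'0
          by (meson less_imp_le mult_left_mono order_trans order_refl)
        then show ?thesis using y1 by simp
      next
        case (Suc k)
        then show ?thesis using fy[of k j] k0 by simp
      qed
    qed
    have "upper_cw (f0 C f) \<le> Max (range (\<lambda>i. f0 C f y $ i / y $ i))"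
      by (rule upper_cw_le_at[OF f0_nonneg py])
    also have "\<dots> \<le> \<rho>'"
    proof -
      have "f0 C f y $ i / y $ i \<le> \<rho>'" for i
      proof (cases "i \<in> C")
        case True
        then show ?thesis using fyC[OF True] final_f0[OF C True py] py
          unfolding pos_vec_def by (simp add: divide_le_eq mult.commute)
      next
        case False
        then show ?thesis unfolding f0_comp using r'0 by simp
      qed
      then show ?thesis by simp
    qed
    finally show False using muC rr by simp
  qed
  have all_unb: "unb i" for i
  proof -
    obtain C j where C: "C \<in> final_classes f" and jC: "j \<in> C" and ij: "(arc f)\<^sup>*\<^sup>* i j"
      using exists_final by blast
    obtain j0 where j0: "j0 \<in> C" "unb j0" using final_unb[OF C] by blast
    obtain c where Cc: "C = scc_of f c" using final_scc[OF C] by blast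
    have "(arc f)\<^sup>*\<^sup>* j j0" using scc_conn jC j0 Cc by blast
    then have "(arc f)\<^sup>*\<^sup>* i j0" using ij by (meson rtranclp_trans)
    then show ?thesis using rt_unb j0 by blast
  qed
  obtain nf where nf: "\<And>i. good (nf i) i" using unb_good[OF all_unb] by metis
  define N where "N = Max (range nf)"
  have gN: "good N i" for i by (rule good_mono[OF nf]) (simp add: N_def)
  have "\<rho> \<le> Min (range (\<lambda>i. f (X N) $ i / X N $ i))"
  proof -
    have "\<rho> \<le> f (X N) $ i / X N $ i" for i
      using gN[of i] pX[of N] unfolding good_def pos_vec_def by (simp add: le_divide_eq mult.commute)
    then show ?thesis by simp
  qed
  also have "\<dots> \<le> lower_cw f" by (rule lower_ge_at[OF pX])
  finally show ?thesis .
qed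


theorem main:
  "upper_cw f = Max ((\<lambda>C. upper_cw (f0 C f)) ` sccs f)
    \<and> lower_cw f = Min ((\<lambda>C. upper_cw (f0 C f)) ` final_classes f)"
proof
  have ne: "sccs f \<noteq> {}" unfolding sccs_def by simp
  have "Max ((\<lambda>C. upper_cw (f0 C f)) ` sccs f) \<le> upper_cw f"
    using sccs_finite ne r_ge by (simp add: Max_le_iff)
  then show "upper_cw f = Max ((\<lambda>C. upper_cw (f0 C f)) ` sccs f)" using r_le by simp
next
  have finF: "finite (final_classes f)"
    using sccs_finite[of f] unfolding final_classes_def by simp
  have neF: "final_classes f \<noteq> {}" using exists_final by blast
  have "lower_cw f \<le> Min ((\<lambda>C. upper_cw (f0 C f)) ` final_classes f)"
    using finF neF lam_le by (simp add: Min_ge_iff)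
  moreover have "Min ((\<lambda>C. upper_cw (f0 C f)) ` final_classes f) \<le> lower_cw f"
    by (rule dense_le) (rule lam_ge)
  ultimately show "lower_cw f = Min ((\<lambda>C. upper_cw (f0 C f)) ` final_classes f)" by simp
qed

end

theorem theorem4p3:
  fixes f :: "real^'n \<Rightarrow> real^'n"
  assumes "\<And>x. pos_vec x \<Longrightarrow> pos_vec (f x)"
    and "order_preserving_pos f"
    and "homogeneous_pos f"
    and "mult_convex f"
  shows "upper_cw f = Max ((\<lambda>C. upper_cw (f0 C f)) ` sccs f)
    \<and> lower_cw f = Min ((\<lambda>C. upper_cw (f0 C f)) ` final_classes f)"
proof -
  interpret L f using assms by (unfold_locales) auto
  show ?thesis by (rule main)
qed

end
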